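(* Let $\mathcal{M}$ be an MRTA instance with robot-task graph $G=(R,T;E;c)$ such that $c$ is metric and injective on $E$. Then (1) $\textsc{Assign}(\mathcal{M})$ provides a 2-approximation for $\textsc{MinSum}(\mathcal{M})$, i.e. $C(\textsc{Assign}(\mathcal{M}))\le2\,C(\textsc{MinSum}(\mathcal{M}))$; and (2) $\textsc{Assign}(\mathcal{M})$ is robust over the interval family $\{(-\underline{\Delta}(e),\overline{\Delta}(e)]:e\in E\}$ output by $\textsc{AuctionSensitivity}(\mathcal{M},W,a)$, where $(W,a)=\textsc{Auction}(\mathcal{M})$: that is, for every edge cost function $c'$ on $E$ with $c'(e)\in(c(e)-\underline{\Delta}(e),c(e)+\overline{\Delta}(e)]$ for all $e\in E$, $\textsc{Auction}$ run with costs $c'$ produces the same list of winning edges $W$, and hence $\textsc{Assign}$ outputs the same plan.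
   Context: $R$ (robots) and $T$ (tasks) are finite disjoint sets with $R\neq\emptyset$, $|R\sqcup T|\ge3$. A metric cost $c$ on $R\sqcup T$ satisfies $c(x,y)\ge0$, $c(x,y)=0$ iff $x=y$, symmetry and the triangle inequality. The robot-task graph has vertex set $R\sqcup T$, edge set $E$ of all 2-element subsets, with edge costs $c(\{x,y\})=c(x,y)$; injective means distinct edges have distinct costs. The cost of a list $P=(v_0,\dots,v_n)$ is $C(P)=\sum_{i=0}^{n-1}c(v_i,v_{i+1})$. A robot-route is such a list with $v_0\in R$ and $v_j\in T$ for $j\ge1$; a plan is a family of $|R|$ robot-routes whose vertex sets partition $R\sqcup T$, with cost the sum of route costs; $\textsc{MinSum}(\mathcal{M})$ is a minimum-cost plan. $\textsc{Auction}$: set $A=\emptyset$, $a(r)=0$ for $r\in R$. For $k=1,\dots,|T|$: let $w_k=\{s,t\}$ be the edge with $s\in R\cup A$, $t\in T\setminus A$ minimising its cost; set $a(t)=k$, $A\leftarrow A\cup\{t\}$. Output $W=(w_1,\dots,w_{|T|})$ and $a$. $\textsc{DFShortcut}$: the edges of $W$ form a forest each of whose components contains exactly one robot. For each robot $r$ with component vertex set $V(r)$, start with $P(r)=(r)$ and, while $P(r)$ does not contain all of $V(r)$, scan $P(r)$ from last to first, and at the first vertex $t$ having a $W$-neighbour not in $P(r)$, append the such neighbour $s$ with smallest $a(s)$. Output $\{P(r):r\in R\}$. $\textsc{Assign}(\mathcal{M})=\textsc{DFShortcut}(\textsc{Auction}(\mathcal{M}))$. For $e=\{x,y\}$, $B_e=\{k\in\mathbb{Z}:\min(a(x),a(y))<k\le\max(a(x),a(y))\}$.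 $\textsc{AuctionSensitivity}(\mathcal{M},W,a)$ outputs $\textsc{ErrorIntervals}(G,W,a,I_0)$ where $I_0=\textsc{Initialiser}(G,W,a)$, defined as follows. $\textsc{Initialiser}$: set $L(e)=0$ for all $e$; process rounds $k$ in order of decreasing $c(w_k)$; for round $k$ let $E_k$ be the set of edges not appearing in $W$ with $k\in B_e$, set $M(e)=\max(L(e),\tfrac12(c(w_k)+c(e)))$ for $e\in E_k$, set $I_0(w_k)=\min_{e\in E_k}M(e)-c(w_k)$, then update $L(e)\leftarrow\max(L(e),c(w_k)+I_0(w_k))$ for $e\in E_k$. $\textsc{ErrorIntervals}$: $\overline{\Delta}(w_k)=I_0(w_k)$; if $e=w_K$ and $B_e\setminus\{K\}\ne\emptyset$, $\underline{\Delta}(e)=c(e)-\max_{k\in B_e\setminus\{K\}}(c(w_k)+\overline{\Delta}(w_k))$; if $e=w_K$ and $B_e\setminus\{K\}=\emptyset$, $\underline{\Delta}(e)=c(e)$; if $e$ is not in $W$, $\overline{\Delta}(e)=\infty$ and $\underline{\Delta}(e)=c(e)-\max_{k\in B_e}(c(w_k)+\overline{\Delta}(w_k))$. *)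

theory Defs
  imports Complex_Main "HOL-Library.Extended_Real" "HOL-Library.While_Combinator"
begin

definition mrta_instance :: "'v set \<Rightarrow> 'v set \<Rightarrow> bool" where
  "mrta_instance R T \<longleftrightarrow> finite R \<and> finite T \<and> R \<inter> T = {} \<and> R \<noteq> {} \<and> card (R \<union> T) \<ge> 3"

definition edges :: "'v set \<Rightarrow> 'v set \<Rightarrow> 'v set set" where
  "edges R T = {e. e \<subseteq> R \<union> T \<and> card e = 2}"

definition metric_cost :: "'v set \<Rightarrow> ('v \<Rightarrow> 'v \<Rightarrow> real) \<Rightarrow> bool" where
  "metric_cost V c \<longleftrightarrow>
     (\<forall>x\<in>V. \<forall>y\<in>V. c x y \<ge> 0 \<and> (c x y = 0 \<longleftrightarrow> x = y) \<and> c x y = c y x) \<and>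
     (\<forall>x\<in>V. \<forall>y\<in>V. \<forall>z\<in>V. c x z \<le> c x y + c y z)"

definition ecost :: "('v \<Rightarrow> 'v \<Rightarrow> real) \<Rightarrow> 'v set \<Rightarrow> real" where
  "ecost c e = (THE r. \<exists>x y. e = {x, y} \<and> r = c x y)"

definition path_cost :: "('v \<Rightarrow> 'v \<Rightarrow> real) \<Rightarrow> 'v list \<Rightarrow> real" where
  "path_cost c P = sum_list (map (\<lambda>(x, y). c x y) (zip P (tl P)))"

definition is_plan :: "'v set \<Rightarrow> 'v set \<Rightarrow> ('v \<Rightarrow> 'v list) \<Rightarrow> bool" where
  "is_plan R T Pl \<longleftrightarrow>
     (\<forall>r\<in>R. Pl r \<noteq> [] \<and> hd (Pl r) = r \<and> set (tl (Pl r)) \<subseteq> T) \<and>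
     (\<forall>r\<in>R. \<forall>r'\<in>R. r \<noteq> r' \<longrightarrow> set (Pl r) \<inter> set (Pl r') = {}) \<and>
     (\<Union>r\<in>R. set (Pl r)) = R \<union> T"

definition plan_cost :: "('v \<Rightarrow> 'v \<Rightarrow> real) \<Rightarrow> 'v set \<Rightarrow> ('v \<Rightarrow> 'v list) \<Rightarrow> real" where
  "plan_cost c R Pl = (\<Sum>r\<in>R. path_cost c (Pl r))"

text \<open>A run of Auction with edge costs w is recorded as the list of pairs (s_k, t_k), k = 1..|T|
  (0-indexed in the list), where w_k = {s_k, t_k} and t_k is the task assigned in round k.
  The predicate allows any minimiser in each round (any tie-breaking).\<close>
definition auction_run :: "'v set \<Rightarrow> 'v set \<Rightarrow> ('v set \<Rightarrow> real) \<Rightarrow> ('v \<times> 'v) list \<Rightarrow> bool" where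
  "auction_run R T w P \<longleftrightarrow> length P = card T \<and>
     (\<forall>k < length P. let A = set (map snd (take k P)); s = fst (P ! k); t = snd (P ! k) in
        s \<in> R \<union> A \<and> t \<in> T - A \<and> (\<forall>s'\<in>R \<union> A. \<forall>t'\<in>T - A. w {s, t} \<le> w {s', t'}))"

text \<open>The (deterministic, for injective costs) output of Auction for the metric c.\<close>
definition auction :: "'v set \<Rightarrow> 'v set \<Rightarrow> ('v \<Rightarrow> 'v \<Rightarrow> real) \<Rightarrow> ('v \<times> 'v) list" where
  "auction R T c = (THE P. auction_run R T (ecost c) P)"

definition wedges :: "('v \<times> 'v) list \<Rightarrow> 'v set list" where
  "wedges P = map (\<lambda>(s, t). {s, t}) P"

definition anum :: "('v \<times> 'v) list \<Rightarrow> 'v \<Rightarrow> nat" where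
  "anum P v = (if v \<in> set (map snd P) then Suc (LEAST k. snd (P ! k) = v) else 0)"

definition nbrs :: "('v \<times> 'v) list \<Rightarrow> 'v \<Rightarrow> 'v set" where
  "nbrs P v = {u. u \<noteq> v \<and> {v, u} \<in> set (wedges P)}"

definition comp :: "('v \<times> 'v) list \<Rightarrow> 'v \<Rightarrow> 'v set" where
  "comp P r = {v. (r, v) \<in> {(x, y). y \<in> nbrs P x}\<^sup>*}"

definition dfs_step :: "('v \<times> 'v) list \<Rightarrow> 'v list \<Rightarrow> 'v list" where
  "dfs_step P L = (let v = last (filter (\<lambda>v. nbrs P v - set L \<noteq> {}) L)
                   in L @ [ARG_MIN (anum P) u. u \<in> nbrs P v - set L])"

definition dfshortcut :: "('v \<times> 'v) list \<Rightarrow> 'v \<Rightarrow> 'v list" where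
  "dfshortcut P r = while (\<lambda>L. \<not> comp P r \<subseteq> set L) (dfs_step P) [r]"

definition assign :: "'v set \<Rightarrow> 'v set \<Rightarrow> ('v \<Rightarrow> 'v \<Rightarrow> real) \<Rightarrow> 'v \<Rightarrow> 'v list" where
  "assign R T c = dfshortcut (auction R T c)"

definition wk :: "('v \<times> 'v) list \<Rightarrow> nat \<Rightarrow> 'v set" where
  "wk P k = wedges P ! (k - 1)"

definition wround :: "('v \<times> 'v) list \<Rightarrow> 'v set \<Rightarrow> nat" where
  "wround P e = Suc (LEAST k. wedges P ! k = e)"

definition Bset :: "('v \<times> 'v) list \<Rightarrow> 'v set \<Rightarrow> nat set" where
  "Bset P e = {k. Min (anum P ` e) < k \<and> k \<le> Max (anum P ` e)}"

definition Eset :: "'v set set \<Rightarrow> ('v \<times> 'v) list \<Rightarrow> nat \<Rightarrow> 'v set set" where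
  "Eset E P k = {e \<in> E. e \<notin> set (wedges P) \<and> k \<in> Bset P e}"

definition init_step :: "('v set \<Rightarrow> real) \<Rightarrow> 'v set set \<Rightarrow> ('v \<times> 'v) list \<Rightarrow> nat
    \<Rightarrow> ('v set \<Rightarrow> ereal) \<times> (nat \<Rightarrow> ereal) \<Rightarrow> ('v set \<Rightarrow> ereal) \<times> (nat \<Rightarrow> ereal)" where
  "init_step ce E P k st = (let L = fst st; I = snd st; Ek = Eset E P k; cw = ce (wk P k);
      M = (\<lambda>e. max (L e) (ereal ((cw + ce e) / 2)));
      i = (INF e\<in>Ek. M e) - ereal cw
    in ((\<lambda>e. if e \<in> Ek then max (L e) (ereal cw + i) else L e), I(k := i)))"

text \<open>I_0, indexed by round k (I_0(w_k)); rounds processed in order of decreasing c(w_k).\<close>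
definition initialiser :: "('v set \<Rightarrow> real) \<Rightarrow> 'v set set \<Rightarrow> ('v \<times> 'v) list \<Rightarrow> nat \<Rightarrow> ereal" where
  "initialiser ce E P = snd (fold (init_step ce E P)
      (rev (sort_key (\<lambda>k. ce (wk P k)) [1..<length P + 1])) (\<lambda>_. 0, \<lambda>_. 0))"

definition delta_up :: "('v set \<Rightarrow> real) \<Rightarrow> 'v set set \<Rightarrow> ('v \<times> 'v) list \<Rightarrow> 'v set \<Rightarrow> ereal" where
  "delta_up ce E P e = (if e \<in> set (wedges P) then initialiser ce E P (wround P e) else \<infinity>)"

definition delta_low :: "('v set \<Rightarrow> real) \<Rightarrow> 'v set set \<Rightarrow> ('v \<times> 'v) list \<Rightarrow> 'v set \<Rightarrow> ereal" where
  "delta_low ce E P e =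
     (if e \<in> set (wedges P) then
        (let S = Bset P e - {wround P e} in
          if S \<noteq> {} then ereal (ce e) - (SUP k\<in>S. ereal (ce (wk P k)) + delta_up ce E P (wk P k))
          else ereal (ce e))
      else ereal (ce e) - (SUP k\<in>Bset P e. ereal (ce (wk P k)) + delta_up ce E P (wk P k)))"

end

theory Submission
  imports Defs
begin

lemma ecost_eq:
  assumes "metric_cost V c" "x \<in> V" "y \<in> V"
  shows "ecost c {x, y} = c x y"
proof -
  have sym: "c a b = c b a" if "a \<in> V" "b \<in> V" for a b
    using assms(1) that unfolding metric_cost_def by blast
  show ?thesis unfolding ecost_def
  proof (rule the_equality)
    show "\<exists>x' y'. {x, y} = {x', y'} \<and> c x y = c x' y'" by blast
  next
    fix r assume "\<exists>x' y'. {x, y} = {x', y'} \<and> r = c x' y'"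
    then obtain x' y' where "{x, y} = {x', y'}" "r = c x' y'" by blast
    then show "r = c x y" using sym assms(2,3) by (auto simp: doubleton_eq_iff)
  qed
qed

lemma metric_nonneg: "metric_cost V c \<Longrightarrow> x \<in> V \<Longrightarrow> y \<in> V \<Longrightarrow> c x y \<ge> 0"
  unfolding metric_cost_def by blast
lemma metric_sym: "metric_cost V c \<Longrightarrow> x \<in> V \<Longrightarrow> y \<in> V \<Longrightarrow> c x y = c y x"
  unfolding metric_cost_def by blast
lemma metric_tri: "metric_cost V c \<Longrightarrow> x \<in> V \<Longrightarrow> y \<in> V \<Longrightarrow> z \<in> V \<Longrightarrow> c x z \<le> c x y + c y z"
  unfolding metric_cost_def by blast

lemma pc_Nil[simp]: "path_cost c [] = 0" by (simp add: path_cost_def)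
lemma pc_single[simp]: "path_cost c [x] = 0" by (simp add: path_cost_def)
lemma pc_cons2[simp]: "path_cost c (x # y # xs) = c x y + path_cost c (y # xs)"
  by (simp add: path_cost_def)

lemma pc_snoc: "xs \<noteq> [] \<Longrightarrow> path_cost c (xs @ [y]) = path_cost c xs + c (last xs) y"
proof (induction xs rule: induct_list012)
  case (3 x z zs) then show ?case by simp
qed auto

lemma pc_app: "path_cost c (xs @ y # ys) = path_cost c (xs @ [y]) + path_cost c (y # ys)"
proof (induction xs rule: induct_list012)
  case 1 then show ?case by simp
next
  case (2 x) then show ?case by (cases ys) auto
next
  case (3 x z zs) then show ?case by simp
qed

lemma pc_nonneg: "metric_cost V c \<Longrightarrow> set xs \<subseteq> V \<Longrightarrow> path_cost c xs \<ge> 0"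
proof (induction xs rule: induct_list012)
  case (3 x y zs)
  then show ?case using metric_nonneg[OF 3(3), of x y] by simp
qed auto

lemma pc_tri: "metric_cost V c \<Longrightarrow> set xs \<subseteq> V \<Longrightarrow> xs \<noteq> [] \<Longrightarrow> c (hd xs) (last xs) \<le> path_cost c xs"
proof (induction xs rule: induct_list012)
  case (2 x) then have "c x x = 0" unfolding metric_cost_def by auto
  then show ?case by simp
next
  case (3 x y zs)
  have "c x (last (y # zs)) \<le> c x y + c y (last (y#zs))"
    by (rule metric_tri[OF 3(3)]) (use 3 in auto)
  then show ?case using 3 by simp
qed auto

lemma sum_set_le_sum_list:
  "(\<And>x. x \<in> set xs \<Longrightarrow> f x \<ge> (0::real)) \<Longrightarrow> sum f (set xs) \<le> sum_list (map f xs)"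
proof (induction xs)
  case (Cons x xs)
  have "sum f (set (x # xs)) \<le> f x + sum f (set xs)"
    by (cases "x \<in> set xs") (auto simp: insert_absorb sum.insert Cons.prems)
  then show ?case using Cons by simp
qed simp

lemma run_Nil: "auction_run R T w [] \<longleftrightarrow> card T = 0"
  by (simp add: auction_run_def)

lemma run_Cons:
  assumes fin: "finite T"
  shows "auction_run R T w ((s, t) # P) \<longleftrightarrow>
    (s \<in> R \<and> t \<in> T \<and> (\<forall>s'\<in>R. \<forall>t'\<in>T. w {s, t} \<le> w {s', t'}) \<and>
     auction_run (insert t R) (T - {t}) w P)"
proof -
  have 1: "R \<union> set (map snd (take (Suc k) ((s,t)#P))) = insert t R \<union> set (map snd (take k P))" for k by simp
  have 2: "T - set (map snd (take (Suc k) ((s,t)#P))) = (T - {t}) - set (map snd (take k P))" for k by auto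
  have all: "(\<forall>k < Suc n. Q k) \<longleftrightarrow> Q 0 \<and> (\<forall>k<n. Q (Suc k))" for Q and n :: nat
    using less_Suc_eq_0_disj by auto
  have len: "t \<in> T \<Longrightarrow> (Suc (length P) = card T) = (length P = card (T - {t}))"
    using fin by (simp add: card_Suc_Diff1[symmetric] del: card_Diff_insert)
  show ?thesis
    using len unfolding auction_run_def length_Cons all Let_def nth_Cons_Suc 1 2
    by auto
qed


lemma run_exists:
  assumes "finite T" "R \<noteq> {}" "finite R"
  shows "\<exists>P. auction_run R T w P"
  using assms
proof (induction "card T" arbitrary: R T)
  case 0
  then have "auction_run R T w []" by (simp add: auction_run_def)
  then show ?case by blast
next
  case (Suc n)
  have "T \<noteq> {}" using Suc.hyps(2) by auto
  let ?f = "\<lambda>p. w {fst p, snd p}"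
  have fin: "finite (R \<times> T)" using Suc.prems by simp
  have ne: "R \<times> T \<noteq> {}" using Suc.prems \<open>T \<noteq> {}\<close> by simp
  obtain p where p: "p \<in> R \<times> T" "?f p = Min (?f ` (R \<times> T))"
  proof -
    have "Min (?f ` (R \<times> T)) \<in> ?f ` (R \<times> T)" using fin ne by (intro Min_in) auto
    then obtain q where "q \<in> R \<times> T" "Min (?f ` (R \<times> T)) = ?f q" by (rule imageE)
    then show ?thesis using that by simp
  qed
  obtain s t where st: "p = (s,t)" by force
  have min: "\<forall>s'\<in>R. \<forall>t'\<in>T. w {s, t} \<le> w {s', t'}"
  proof (intro ballI)
    fix s' t' assume "s' \<in> R" "t' \<in> T"
    then have "?f (s',t') \<in> ?f ` (R \<times> T)" by (intro imageI) simp
    then have "?f (s',t') \<ge> Min (?f ` (R \<times> T))" using finite_imageI[OF fin] by (rule Min_le[rotated])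
    then show "w {s, t} \<le> w {s', t'}" using p st by simp
  qed
  have "n = card (T - {t})" using Suc.prems Suc.hyps(2) p st by simp
  then obtain P where P: "auction_run (insert t R) (T - {t}) w P"
    using Suc.hyps(1)[of "T - {t}" "insert t R"] Suc.prems by blast
  have "s \<in> R" "t \<in> T" using p st by auto
  then have "auction_run R T w ((s,t)#P)"
    unfolding run_Cons[OF Suc.prems(1)] using min P by blast
  then show ?case by blast
qed


lemma run_unique:
  assumes "auction_run R T w P1" "auction_run R T w P2" "finite T" "R \<inter> T = {}"
    "inj_on w {e. e \<subseteq> R \<union> T \<and> card e = 2}"
  shows "P1 = P2"
  using assms
proof (induction P1 arbitrary: R T P2)
  case Nil
  then have "T = {}" by (simp add: auction_run_def)
  then show ?case using Nil.prems(2) by (simp add: auction_run_def)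
next
  case (Cons p P1)
  obtain s1 t1 where p: "p = (s1,t1)" by force
  from Cons.prems(1,3) have "T \<noteq> {}" by (auto simp: auction_run_def)
  then have "P2 \<noteq> []" using Cons.prems(2,3) by (auto simp: auction_run_def)
  then obtain s2 t2 P2' where P2: "P2 = (s2,t2) # P2'" by (metis list.exhaust prod.exhaust)
  have A: "s1 \<in> R \<and> t1 \<in> T \<and> (\<forall>s'\<in>R. \<forall>t'\<in>T. w {s1, t1} \<le> w {s', t'}) \<and>
     auction_run (insert t1 R) (T - {t1}) w P1" using Cons.prems(1) p run_Cons[OF Cons.prems(3)] by simp
  have B: "s2 \<in> R \<and> t2 \<in> T \<and> (\<forall>s'\<in>R. \<forall>t'\<in>T. w {s2, t2} \<le> w {s', t'}) \<and>
     auction_run (insert t2 R) (T - {t2}) w P2'" using Cons.prems(2) P2 run_Cons[OF Cons.prems(3)] by simp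
  have "w {s1,t1} \<le> w {s2,t2}" "w {s2,t2} \<le> w {s1,t1}" using A B by auto
  then have "w {s1,t1} = w {s2,t2}" by simp
  moreover have "{s1,t1} \<in> {e. e \<subseteq> R \<union> T \<and> card e = 2}" "{s2,t2} \<in> {e. e \<subseteq> R \<union> T \<and> card e = 2}"
  proof -
    have "s1 \<noteq> t1" "s2 \<noteq> t2" using A B Cons.prems(4) by auto
    then show "{s1,t1} \<in> {e. e \<subseteq> R \<union> T \<and> card e = 2}" "{s2,t2} \<in> {e. e \<subseteq> R \<union> T \<and> card e = 2}"
      using A B by auto
  qed
  ultimately have "{s1,t1} = {s2,t2}" using Cons.prems(5) by (meson inj_onD)
  moreover have "s1 \<noteq> t2" "s2 \<noteq> t1" using A B Cons.prems(4) by auto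
  ultimately have st: "s1 = s2" "t1 = t2" by (auto simp: doubleton_eq_iff)
  have "insert t1 R \<union> (T - {t1}) = R \<union> T" using A by auto
  moreover have "insert t1 R \<inter> (T - {t1}) = {}" using Cons.prems(4) by auto
  moreover have "finite (T - {t1})" using Cons.prems(3) by simp
  ultimately have "P1 = P2'" using Cons.IH[of "insert t1 R" "T - {t1}" P2'] A B st Cons.prems(5) by simp
  then show ?case using p P2 st by simp
qed

definition relF :: "'v set set \<Rightarrow> ('v \<times> 'v) set" where
  "relF F = {(x, y). {x, y} \<in> F}"

lemma relF_sym: "sym (relF F)"
  unfolding relF_def sym_def by (auto simp: insert_commute)

lemma crossing:
  assumes "(t1, x) \<in> (relF F)\<^sup>*" "t1 \<notin> R"
  shows "(t1, x) \<in> (relF {e\<in>F. e \<inter> R = {}})\<^sup>* \<and> x \<notin> R \<or>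
    (\<exists>y z. {y, z} \<in> F \<and> z \<in> R \<and> y \<notin> R \<and> (t1, y) \<in> (relF {e\<in>F. e \<inter> R = {}})\<^sup>*)"
  using assms(1)
proof (induction rule: rtrancl_induct)
  case base then show ?case using assms(2) by auto
next
  case (step x x')
  from step(3) show ?case
  proof (elim disjE)
    assume a: "(t1, x) \<in> (relF {e\<in>F. e \<inter> R = {}})\<^sup>* \<and> x \<notin> R"
    have xx: "{x, x'} \<in> F" using step(2) by (simp add: relF_def)
    show ?thesis
    proof (cases "x' \<in> R")
      case True then show ?thesis using a xx by blast
    next
      case False
      then have "(x, x') \<in> relF {e \<in> F. e \<inter> R = {}}" using a xx by (simp add: relF_def)
      then show ?thesis using a False by (meson rtrancl.rtrancl_into_rtrancl)
    qed
  next
    assume "\<exists>y z. {y, z} \<in> F \<and> z \<in> R \<and> y \<notin> R \<and> (t1, y) \<in> (relF {e\<in>F. e \<inter> R = {}})\<^sup>*"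
    then show ?thesis by blast
  qed
qed

lemma reach_remove:
  assumes "(a, r0) \<in> (relF F)\<^sup>*" "r0 \<in> R" "z \<in> R" "(y, t) \<in> (relF (F - {{y,z}}))\<^sup>*"
  shows "\<exists>r'\<in>insert t R. (a, r') \<in> (relF (F - {{y,z}}))\<^sup>*"
  using assms(1)
proof (induction rule: converse_rtrancl_induct)
  case base then show ?case using assms(2) by blast
next
  case (step a b)
  then obtain r' where r': "r' \<in> insert t R" "(b, r') \<in> (relF (F - {{y,z}}))\<^sup>*" by blast
  show ?case
  proof (cases "{a,b} = {y,z}")
    case False
    then have "(a,b) \<in> relF (F - {{y,z}})" using step(1) by (auto simp: relF_def)
    then show ?thesis using r' by (meson converse_rtrancl_into_rtrancl)
  next
    case True
    then have "a = y \<or> a = z" by (auto simp: doubleton_eq_iff)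
    then show ?thesis using assms(3,4) by auto
  qed
qed

lemma mst:
  assumes "auction_run R T w P" "finite T" "finite F" "R \<inter> T = {}"
    "\<forall>e\<in>F. e \<subseteq> R \<union> T \<and> w e \<ge> 0"
    "\<forall>t\<in>T. \<exists>r\<in>R. (t, r) \<in> (relF F)\<^sup>*"
  shows "sum_list (map w (wedges P)) \<le> sum w F"
  using assms
proof (induction P arbitrary: R T F)
  case Nil
  then show ?case by (simp add: wedges_def sum_nonneg)
next
  case (Cons p P)
  obtain s t where p: "p = (s,t)" by force
  have A: "s \<in> R \<and> t \<in> T \<and> (\<forall>s'\<in>R. \<forall>t'\<in>T. w {s, t} \<le> w {s', t'}) \<and>
     auction_run (insert t R) (T - {t}) w P" using Cons.prems p run_Cons by metis
  obtain r where r: "r \<in> R" "(t, r) \<in> (relF F)\<^sup>*" using A Cons.prems(6) by blast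
  have tR: "t \<notin> R" using A Cons.prems(4) by blast
  from crossing[OF r(2) tR] r(1)
  obtain y z where yz: "{y, z} \<in> F" "z \<in> R" "y \<notin> R" "(t, y) \<in> (relF {e\<in>F. e \<inter> R = {}})\<^sup>*"
    by blast
  have yT: "y \<in> T" using yz Cons.prems(5) by blast
  have le: "w {s,t} \<le> w {y,z}" using A yz yT by (metis insert_commute)
  have "relF {e\<in>F. e \<inter> R = {}} \<subseteq> relF (F - {{y,z}})"
  proof
    fix q assume "q \<in> relF {e\<in>F. e \<inter> R = {}}"
    then obtain a b where q: "q = (a,b)" "{a,b} \<in> F" "{a,b} \<inter> R = {}" by (auto simp: relF_def)
    have "{a,b} \<noteq> {y,z}" using q(3) yz(2) by blast
    then show "q \<in> relF (F - {{y,z}})" using q by (simp add: relF_def)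
  qed
  then have "(t, y) \<in> (relF (F - {{y,z}}))\<^sup>*" using yz(4) rtrancl_mono by blast
  then have yt: "(y, t) \<in> (relF (F - {{y,z}}))\<^sup>*" using sym_rtrancl[OF relF_sym] by (meson symD)
  have reach: "\<forall>t'\<in>T - {t}. \<exists>r'\<in>insert t R. (t', r') \<in> (relF (F - {{y,z}}))\<^sup>*"
  proof
    fix t' assume "t' \<in> T - {t}"
    then obtain r0 where "r0 \<in> R" "(t', r0) \<in> (relF F)\<^sup>*" using Cons.prems(6) by blast
    then show "\<exists>r'\<in>insert t R. (t', r') \<in> (relF (F - {{y,z}}))\<^sup>*"
      using reach_remove[OF _ _ yz(2) yt] by blast
  qed
  have "sum_list (map w (wedges P)) \<le> sum w (F - {{y,z}})"
    apply (rule Cons.IH[OF conjunct2[OF conjunct2[OF conjunct2[OF A]]]])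
    using Cons.prems A reach by auto
  moreover have "sum w F = w {y,z} + sum w (F - {{y,z}})"
    using Cons.prems(3) yz(1) by (simp add: sum.remove)
  ultimately show ?case using le p by (simp add: wedges_def)
qed

definition par :: "('v \<times> 'v) list \<Rightarrow> 'v \<Rightarrow> 'v" where
  "par P v = (if v \<in> set (map snd P) then fst (P ! (anum P v - 1)) else v)"

definition rho :: "('v \<times> 'v) list \<Rightarrow> 'v \<Rightarrow> 'v" where
  "rho P v = (par P ^^ length P) v"

definition nrel :: "('v \<times> 'v) list \<Rightarrow> ('v \<times> 'v) set" where
  "nrel P = {(x, y). y \<in> nbrs P x}"

lemma comp_nrel: "comp P r = {v. (r, v) \<in> (nrel P)\<^sup>*}"
  by (simp add: comp_def nrel_def)

context
  fixes R T :: "'v set" and w P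
  assumes run: "auction_run R T w P" and finT: "finite T" and disj: "R \<inter> T = {}"
begin

lemma len: "length P = card T"
  using run by (simp add: auction_run_def)

lemma run_k:
  assumes "k < length P"
  shows "fst (P ! k) \<in> R \<union> set (map snd (take k P))"
    "snd (P ! k) \<in> T - set (map snd (take k P))"
    "\<forall>s'\<in>R \<union> set (map snd (take k P)). \<forall>t'\<in>T - set (map snd (take k P)).
        w {fst (P ! k), snd (P ! k)} \<le> w {s', t'}"
  using run assms unfolding auction_run_def Let_def by blast+

lemma in_take: "v \<in> set (map snd (take k P)) \<Longrightarrow> \<exists>i<k. i < length P \<and> v = snd (P ! i)"
proof -
  assume "v \<in> set (map snd (take k P))"
  then obtain i where i: "i < length (map snd (take k P))" "v = map snd (take k P) ! i"
    by (metis in_set_conv_nth)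
  then show ?thesis by auto
qed

lemma snd_in_take: "i < j \<Longrightarrow> i < length P \<Longrightarrow> snd (P ! i) \<in> set (map snd (take j P))"
proof -
  assume ij: "i < j" "i < length P"
  then have "i < length (map snd (take j P))" by simp
  then have "map snd (take j P) ! i \<in> set (map snd (take j P))" by (rule nth_mem)
  then show ?thesis using ij by simp
qed

lemma snd_in: "i < length P \<Longrightarrow> snd (P ! i) \<in> set (map snd P)"
  by (metis length_map nth_map nth_mem)

lemma snd_distinct: "distinct (map snd P)"
proof (subst distinct_conv_nth, intro allI impI)
  fix i j assume ij: "i < length (map snd P)" "j < length (map snd P)" "i \<noteq> j"
  show "map snd P ! i \<noteq> map snd P ! j"
  proof (cases "i < j")
    case True
    have "snd (P ! i) \<in> set (map snd (take j P))" using True ij snd_in_take by simp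
    moreover have "snd (P ! j) \<notin> set (map snd (take j P))" using run_k(2)[of j] ij by simp
    ultimately show ?thesis using ij by (metis length_map nth_map)
  next
    case False
    then have "j < i" using ij by simp
    have "snd (P ! j) \<in> set (map snd (take i P))" using \<open>j < i\<close> ij snd_in_take by simp
    moreover have "snd (P ! i) \<notin> set (map snd (take i P))" using run_k(2)[of i] ij by simp
    ultimately show ?thesis using ij by (metis length_map nth_map)
  qed
qed

lemma snd_set: "set (map snd P) = T"
proof -
  have sub: "set (map snd P) \<subseteq> T"
  proof
    fix v assume "v \<in> set (map snd P)"
    then obtain k where "k < length P" "v = snd (P ! k)" by (metis in_set_conv_nth length_map nth_map)
    then show "v \<in> T" using run_k(2)[of k] by auto
  qed
  have "card (set (map snd P)) = card T"
    using distinct_card[OF snd_distinct] len by simp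
  then show ?thesis using card_subset_eq[OF finT sub] by simp
qed

lemma anum_snd:
  assumes k: "k < length P"
  shows "anum P (snd (P ! k)) = Suc k"
proof -
  have inset: "snd (P ! k) \<in> set (map snd P)" using k by (rule snd_in)
  have "(LEAST j. snd (P ! j) = snd (P ! k)) = k"
  proof (rule Least_equality)
    fix y assume y: "snd (P ! y) = snd (P ! k)"
    show "k \<le> y"
    proof (rule ccontr)
      assume "\<not> k \<le> y"
      then have "y < length P" "y \<noteq> k" using k by auto
      then show False using y k snd_distinct by (simp add: distinct_conv_nth)
    qed
  qed simp
  then show ?thesis using inset by (simp add: anum_def)
qed

lemma anum_notT: "v \<notin> T \<Longrightarrow> anum P v = 0"
  using snd_set by (simp add: anum_def)

lemma T_nth: "v \<in> T \<Longrightarrow> \<exists>k<length P. v = snd (P ! k)"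
  using snd_set by (metis in_set_conv_nth length_map nth_map)

lemma anum_le: "anum P v \<le> length P"
proof (cases "v \<in> T")
  case True
  then obtain k where "k < length P" "v = snd (P ! k)" using T_nth by blast
  then show ?thesis using anum_snd by simp
qed (simp add: anum_notT)

lemma anum_A: "v \<in> set (map snd (take k P)) \<Longrightarrow> anum P v \<le> k"
  using in_take anum_snd by fastforce

lemma anum_notA:
  assumes "v \<in> T - set (map snd (take k P))"
  shows "Suc k \<le> anum P v"
proof -
  obtain i where i: "i < length P" "v = snd (P ! i)" using assms T_nth by blast
  have "\<not> i < k"
  proof
    assume "i < k"
    then have "v \<in> set (map snd (take k P))" using i snd_in_take by simp
    then show False using assms by blast
  qed
  then show ?thesis using i anum_snd by simp
qed

lemma A_sub: "set (map snd (take k P)) \<subseteq> T"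
  using snd_set by (metis List.set_take_subset image_mono set_map)

lemma anum_src: "k < length P \<Longrightarrow> anum P (fst (P ! k)) \<le> k"
proof -
  assume k: "k < length P"
  show ?thesis
  proof (cases "fst (P ! k) \<in> R")
    case True
    then have "fst (P ! k) \<notin> T" using disj by blast
    then show ?thesis using anum_notT by simp
  next
    case False
    then show ?thesis using run_k(1)[OF k] anum_A by blast
  qed
qed

lemma src_V: "k < length P \<Longrightarrow> fst (P ! k) \<in> R \<union> T"
  using run_k(1)[of k] A_sub[of k] by blast
lemma tgt_T: "k < length P \<Longrightarrow> snd (P ! k) \<in> T"
  using run_k(2)[of k] by blast
lemma src_ne_tgt: "k < length P \<Longrightarrow> fst (P ! k) \<noteq> snd (P ! k)"
proof -
  have aux: "a \<in> R \<union> X \<Longrightarrow> b \<in> T - X \<Longrightarrow> a \<noteq> b" for a b X using disj by blast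
  assume "k < length P"
  then show ?thesis using aux run_k(1,2) by metis
qed

lemma wedges_nth: "k < length P \<Longrightarrow> wedges P ! k = {fst (P ! k), snd (P ! k)}"
  unfolding wedges_def by (simp add: split_beta)
lemma wedges_len: "length (wedges P) = length P"
  by (simp add: wedges_def)
lemma in_wedges: "e \<in> set (wedges P) \<Longrightarrow> \<exists>k<length P. e = {fst (P ! k), snd (P ! k)}"
  by (metis in_set_conv_nth wedges_len wedges_nth)
lemma wedges_V: "e \<in> set (wedges P) \<Longrightarrow> e \<subseteq> R \<union> T"
  using in_wedges src_V tgt_T by blast

lemma par_snd: "k < length P \<Longrightarrow> par P (snd (P ! k)) = fst (P ! k)"
  using anum_snd snd_in by (simp add: par_def)

lemma par_R: "v \<in> R \<Longrightarrow> par P v = v"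
  using snd_set disj by (auto simp: par_def)

lemma funpow_R: "v \<in> R \<Longrightarrow> (par P ^^ m) v = v"
  by (induction m) (auto simp: par_R)

lemma par_to_R: "v \<in> R \<union> T \<Longrightarrow> anum P v \<le> m \<Longrightarrow> (par P ^^ m) v \<in> R"
proof (induction m arbitrary: v)
  case 0
  have "v \<in> R"
  proof (rule ccontr)
    assume "v \<notin> R"
    then have "v \<in> T" using 0 by blast
    then have "anum P v \<noteq> 0" using snd_set by (simp add: anum_def)
    then show False using 0 by simp
  qed
  then show ?case by simp
next
  case (Suc m)
  show ?case
  proof (cases "v \<in> R")
    case True then show ?thesis using funpow_R[of v "Suc m"] by simp
  next
    case False
    then have "v \<in> T" using Suc.prems by blast
    then obtain k where k: "k < length P" "v = snd (P ! k)" using T_nth by blast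
    have "anum P (fst (P ! k)) \<le> m" using anum_src[OF k(1)] Suc.prems(2) anum_snd[OF k(1)] k(2) by simp
    then have "(par P ^^ m) (fst (P ! k)) \<in> R" using Suc.IH src_V[OF k(1)] by blast
    then show ?thesis using par_snd[OF k(1)] k(2) by (simp add: funpow_Suc_right del: funpow.simps)
  qed
qed

lemma rho_R: "v \<in> R \<union> T \<Longrightarrow> rho P v \<in> R"
  unfolding rho_def using par_to_R anum_le by blast

lemma rho_robot: "r \<in> R \<Longrightarrow> rho P r = r"
  unfolding rho_def using funpow_R by blast

lemma rho_edge:
  assumes k: "k < length P"
  shows "rho P (snd (P ! k)) = rho P (fst (P ! k))"
proof -
  obtain n where n: "length P = Suc n" using k by (cases "length P") auto
  have "rho P (snd (P ! k)) = (par P ^^ n) (fst (P ! k))"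
    unfolding rho_def n using par_snd[OF k] by (simp add: funpow_Suc_right del: funpow.simps)
  moreover have "(par P ^^ n) (fst (P ! k)) \<in> R"
    using par_to_R[OF src_V[OF k]] anum_src[OF k] k n by simp
  then have "rho P (fst (P ! k)) = (par P ^^ n) (fst (P ! k))"
    unfolding rho_def n using par_R by simp
  ultimately show ?thesis by simp
qed

lemma nbrs_edge: "y \<in> nbrs P x \<Longrightarrow> \<exists>k<length P. {x, y} = {fst (P ! k), snd (P ! k)}"
  unfolding nbrs_def using in_wedges by blast

lemma nbrs_rho: "y \<in> nbrs P x \<Longrightarrow> x \<in> R \<union> T \<and> y \<in> R \<union> T \<and> rho P x = rho P y"
proof -
  assume "y \<in> nbrs P x"
  then obtain k where k: "k < length P" "{x, y} = {fst (P ! k), snd (P ! k)}" using nbrs_edge by blast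
  have "x \<in> R \<union> T \<and> y \<in> R \<union> T" using k src_V tgt_T by (auto simp: doubleton_eq_iff)
  moreover have "rho P x = rho P y" using k rho_edge[OF k(1)] by (auto simp: doubleton_eq_iff)
  ultimately show ?thesis by blast
qed

lemma nbrs_V: "nbrs P x \<subseteq> R \<union> T"
  using nbrs_rho by blast

lemma comp_rho: "r \<in> R \<Longrightarrow> v \<in> comp P r \<Longrightarrow> v \<in> R \<union> T \<and> rho P v = r"
proof -
  assume r: "r \<in> R" and "v \<in> comp P r"
  then have "(r, v) \<in> (nrel P)\<^sup>*" by (simp add: comp_nrel)
  then show ?thesis
  proof (induction rule: rtrancl_induct)
    case base then show ?case using r rho_robot by blast
  next
    case (step y z)
    then show ?case using nbrs_rho[of z y] by (simp add: nrel_def)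
  qed
qed

lemma comp_all: "v \<in> R \<union> T \<Longrightarrow> v \<in> comp P (rho P v)"
proof (induction "anum P v" arbitrary: v rule: less_induct)
  case less
  show ?case
  proof (cases "v \<in> R")
    case True then show ?thesis using rho_robot by (simp add: comp_nrel)
  next
    case False
    then have "v \<in> T" using less.prems by blast
    then obtain k where k: "k < length P" "v = snd (P ! k)" using T_nth by blast
    let ?s = "fst (P ! k)"
    have "anum P ?s < anum P v" using anum_src[OF k(1)] anum_snd[OF k(1)] k(2) by simp
    then have "?s \<in> comp P (rho P ?s)" using less.hyps src_V[OF k(1)] by blast
    moreover have "rho P ?s = rho P v" using rho_edge[OF k(1)] k(2) by simp
    moreover have "(?s, v) \<in> nrel P"
    proof -
      have "{?s, v} \<in> set (wedges P)" using k wedges_nth wedges_len by (metis nth_mem)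
      moreover have "v \<noteq> ?s" using src_ne_tgt[OF k(1)] k(2) by simp
      ultimately show ?thesis by (simp add: nrel_def nbrs_def)
    qed
    ultimately show ?thesis by (simp add: comp_nrel)
  qed
qed

lemma comp_V: "r \<in> R \<Longrightarrow> comp P r \<subseteq> R \<union> T"
  using comp_rho by blast

lemma comp_disj: "r \<in> R \<Longrightarrow> r' \<in> R \<Longrightarrow> r \<noteq> r' \<Longrightarrow> comp P r \<inter> comp P r' = {}"
  using comp_rho by blast

lemma comp_R: "r \<in> R \<Longrightarrow> comp P r \<inter> R = {r}"
proof -
  assume r: "r \<in> R"
  have "r \<in> comp P r" by (simp add: comp_nrel)
  moreover have "v = r" if "v \<in> comp P r" "v \<in> R" for v
    using comp_rho[OF r that(1)] rho_robot[OF that(2)] by simp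
  ultimately show ?thesis using r by blast
qed

lemma comp_union: "(\<Union>r\<in>R. comp P r) = R \<union> T"
proof
  show "(\<Union>r\<in>R. comp P r) \<subseteq> R \<union> T" using comp_V by blast
  show "R \<union> T \<subseteq> (\<Union>r\<in>R. comp P r)"
  proof
    fix v assume "v \<in> R \<union> T"
    then show "v \<in> (\<Union>r\<in>R. comp P r)" using comp_all rho_R by blast
  qed
qed

end

definition Wt :: "('v \<Rightarrow> 'v \<Rightarrow> real) \<Rightarrow> ('v \<times> 'v) list \<Rightarrow> 'v set \<Rightarrow> real" where
  "Wt c P X = sum (ecost c) {e \<in> set (wedges P). e \<subseteq> X}"

lemma last_filter_decomp:
  "filter Q L \<noteq> [] \<Longrightarrow> \<exists>L1 L2. L = L1 @ last (filter Q L) # L2 \<and> (\<forall>x\<in>set L2. \<not> Q x)"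
proof (induction L rule: rev_induct)
  case Nil then show ?case by simp
next
  case (snoc x xs)
  show ?case
  proof (cases "Q x")
    case True
    then have "last (filter Q (xs @ [x])) = x" by simp
    then show ?thesis by (metis append_Nil2 empty_iff list.set(1))
  next
    case False
    then have e: "filter Q (xs @ [x]) = filter Q xs" by simp
    then obtain L1 L2 where "xs = L1 @ last (filter Q xs) # L2" "\<forall>x\<in>set L2. \<not> Q x"
      using snoc by auto
    then have "xs @ [x] = L1 @ last (filter Q (xs @ [x])) # (L2 @ [x]) \<and> (\<forall>y\<in>set (L2 @ [x]). \<not> Q y)"
      using False e by (metis Cons_eq_appendI append_assoc rotate1.simps(2) set_rotate1 set_ConsD)
    then show ?thesis by blast
  qed
qed

lemma last_filter_in: "xs \<noteq> [] \<Longrightarrow> last xs \<in> Z \<Longrightarrow> last (filter (\<lambda>x. x \<in> Z) xs) = last xs"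
proof -
  assume "xs \<noteq> []" "last xs \<in> Z"
  then have "xs = butlast xs @ [last xs]" by simp
  then have "filter (\<lambda>x. x \<in> Z) xs = filter (\<lambda>x. x \<in> Z) (butlast xs) @ [last xs]"
    using \<open>last xs \<in> Z\<close> by (metis filter.simps filter_append)
  then show ?thesis by simp
qed

lemma exit_lemma: "(a, b) \<in> rel\<^sup>* \<Longrightarrow> a \<in> X \<Longrightarrow> b \<notin> X \<Longrightarrow> \<exists>x\<in>X. \<exists>y. (x, y) \<in> rel \<and> y \<notin> X"
proof (induction rule: rtrancl_induct)
  case base then show ?case by simp
next
  case (step y z)
  then show ?case by (cases "y \<in> X") auto
qed

context
  fixes R T :: "'v set" and w P and c :: "'v \<Rightarrow> 'v \<Rightarrow> real" and r :: 'v
  assumes run: "auction_run R T w P" and finT: "finite T" and disj: "R \<inter> T = {}"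
    and finR: "finite R" and met: "metric_cost (R \<union> T) c" and rR: "r \<in> R"
begin

definition inv :: "'v list \<Rightarrow> 'v set \<Rightarrow> bool" where
  "inv L Z \<longleftrightarrow> L \<noteq> [] \<and> hd L = r \<and> distinct L \<and> set L \<subseteq> comp P r \<and> last L \<in> Z \<and>
     (\<forall>x\<in>set L - Z. nbrs P x \<subseteq> set L) \<and>
     path_cost c L + path_cost c (filter (\<lambda>x. x \<in> Z) L) \<le> 2 * Wt c P (set L)"

lemma compV: "comp P r \<subseteq> R \<union> T"
  using comp_V[OF run finT disj rR] .

lemma ecost_nonneg_W: "e \<in> set (wedges P) \<Longrightarrow> ecost c e \<ge> 0"
proof -
  assume "e \<in> set (wedges P)"
  then obtain k where k: "k < length P" "e = {fst (P ! k), snd (P ! k)}" using in_wedges[OF run finT disj] by blast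
  have "fst (P ! k) \<in> R \<union> T" "snd (P ! k) \<in> R \<union> T"
    using src_V[OF run finT disj k(1)] tgt_T[OF run finT disj k(1)] by auto
  then show ?thesis using k(2) ecost_eq[OF met] metric_nonneg[OF met] by simp
qed

lemma Wt_nonneg: "Wt c P X \<ge> 0"
  unfolding Wt_def by (rule sum_nonneg) (use ecost_nonneg_W in blast)

lemma Wt_step:
  assumes "{v, u} \<in> set (wedges P)" "v \<in> X" "u \<notin> X" "v \<in> R \<union> T" "u \<in> R \<union> T"
  shows "Wt c P X + c v u \<le> Wt c P (insert u X)"
proof -
  let ?A = "{e \<in> set (wedges P). e \<subseteq> X}"
  let ?B = "{e \<in> set (wedges P). e \<subseteq> insert u X}"
  have fin: "finite ?B" by simp
  have sub: "insert {v,u} ?A \<subseteq> ?B" using assms by auto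
  have nin: "{v,u} \<notin> ?A" using assms(3) by auto
  have "Wt c P X + c v u = sum (ecost c) (insert {v,u} ?A)"
    using nin ecost_eq[OF met assms(4,5)] by (simp add: Wt_def)
  also have "\<dots> \<le> sum (ecost c) ?B"
    by (rule sum_mono2[OF fin sub]) (use ecost_nonneg_W in blast)
  finally show ?thesis by (simp add: Wt_def)
qed

lemma inv_step:
  assumes I: "inv L Z" and nc: "\<not> comp P r \<subseteq> set L"
  shows "\<exists>Z'. inv (dfs_step P L) Z' \<and> (\<exists>u. u \<in> comp P r - set L \<and> dfs_step P L = L @ [u])"
proof -
  let ?Q = "\<lambda>v. nbrs P v - set L \<noteq> {}"
  have Lne: "L \<noteq> []" and hdL: "hd L = r" and dist: "distinct L" and Lc: "set L \<subseteq> comp P r"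
    and lastZ: "last L \<in> Z" and clos: "\<forall>x\<in>set L - Z. nbrs P x \<subseteq> set L"
    and cost: "path_cost c L + path_cost c (filter (\<lambda>x. x \<in> Z) L) \<le> 2 * Wt c P (set L)"
    using I unfolding inv_def by blast+
  have V: "set L \<subseteq> R \<union> T" using Lc compV by blast
  obtain y where y: "y \<in> comp P r" "y \<notin> set L" using nc by blast
  have rL: "r \<in> set L" using Lne hdL hd_in_set by force
  obtain x y' where xy: "x \<in> set L" "(x, y') \<in> nrel P" "y' \<notin> set L"
    using exit_lemma[of r y "nrel P" "set L"] y rL by (auto simp: comp_nrel)
  have "?Q x" using xy by (auto simp: nrel_def)
  then have fne: "filter ?Q L \<noteq> []" using xy(1) by (metis (mono_tags, lifting) filter_empty_conv)
  define v where "v = last (filter ?Q L)"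
  obtain L1 L2 where dec: "L = L1 @ v # L2" "\<forall>x\<in>set L2. \<not> ?Q x"
    using last_filter_decomp[OF fne] unfolding v_def by blast
  have "v \<in> set (filter ?Q L)" using last_in_set[OF fne] unfolding v_def .
  then have Qv: "?Q v" by simp
  then obtain u0 where "u0 \<in> nbrs P v - set L" by blast
  define u where "u = (ARG_MIN (anum P) u. u \<in> nbrs P v - set L)"
  have u: "u \<in> nbrs P v - set L"
    unfolding u_def using arg_min_nat_lemma[of "\<lambda>u. u \<in> nbrs P v - set L", OF \<open>u0 \<in> _\<close>] by blast
  have step_eq: "dfs_step P L = L @ [u]"
    unfolding dfs_step_def Let_def v_def[symmetric] u_def by simp
  have vL: "v \<in> set L" using dec by simp
  have vZ: "v \<in> Z" using clos vL Qv by blast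
  have vc: "v \<in> comp P r" using Lc vL by blast
  have uc: "u \<in> comp P r" using vc u by (auto simp: comp_nrel nrel_def intro: rtrancl_into_rtrancl)
  have uV: "u \<in> R \<union> T" and vV: "v \<in> R \<union> T" using uc vc compV by blast+
  have uL: "u \<notin> set L" using u by blast
  have vu: "{v, u} \<in> set (wedges P)" using u by (auto simp: nbrs_def)
  define Z' where "Z' = (Z - set L2) \<union> {u}"
  define S1 where "S1 = filter (\<lambda>x. x \<in> Z) L1"
  define S2 where "S2 = filter (\<lambda>x. x \<in> Z) L2"
  have d12: "set L1 \<inter> set L2 = {}" "v \<notin> set L1" "v \<notin> set L2" using dist dec by auto
  have S: "filter (\<lambda>x. x \<in> Z) L = S1 @ v # S2" using dec vZ by (simp add: S1_def S2_def)
  have f1: "filter (\<lambda>x. x \<in> Z') L1 = S1"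
    unfolding S1_def Z'_def
  proof (rule filter_cong[OF refl])
    fix x assume "x \<in> set L1"
    then have "x \<notin> set L2" "x \<noteq> u" using d12 uL dec by auto
    then show "(x \<in> Z - set L2 \<union> {u}) = (x \<in> Z)" by blast
  qed
  have f2: "filter (\<lambda>x. x \<in> Z') L2 = []"
    unfolding Z'_def using uL dec by (auto simp: filter_empty_conv)
  have S': "filter (\<lambda>x. x \<in> Z') (L @ [u]) = S1 @ [v, u]"
    using f1 f2 dec d12 vZ by (simp add: Z'_def)
  have lastL: "last L = last (v # S2)"
  proof -
    have "last L = last (filter (\<lambda>x. x \<in> Z) L)" using last_filter_in[OF Lne lastZ] by simp
    also have "\<dots> = last (v # S2)" using S by simp
    finally show ?thesis .
  qed
  have SV: "set (v # S2) \<subseteq> R \<union> T" using V dec by (auto simp: S2_def)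
  have lastV: "last (v # S2) \<in> R \<union> T" using SV last_in_set by blast
  have tri: "c (last L) u \<le> path_cost c (v # S2) + c v u"
  proof -
    have "c (last (v # S2)) u \<le> c (last (v # S2)) v + c v u"
      using metric_tri[OF met lastV vV uV] .
    moreover have "c (last (v # S2)) v = c v (last (v # S2))" using metric_sym[OF met lastV vV] .
    moreover have "c v (last (v # S2)) \<le> path_cost c (v # S2)"
      using pc_tri[OF met SV] by simp
    ultimately show ?thesis using lastL by simp
  qed
  have pcL': "path_cost c (L @ [u]) = path_cost c L + c (last L) u" using pc_snoc[OF Lne] .
  have pcS: "path_cost c (S1 @ v # S2) = path_cost c (S1 @ [v]) + path_cost c (v # S2)" by (rule pc_app)
  have pcS': "path_cost c (S1 @ [v, u]) = path_cost c (S1 @ [v]) + c v u"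
    using pc_snoc[of "S1 @ [v]" c u] by simp
  have W': "Wt c P (set L) + c v u \<le> Wt c P (set (L @ [u]))"
    using Wt_step[OF vu vL uL vV uV] by simp
  have costok: "path_cost c (L @ [u]) + path_cost c (filter (\<lambda>x. x \<in> Z') (L @ [u])) \<le> 2 * Wt c P (set (L @ [u]))"
    using cost S S' pcL' pcS pcS' tri W' by simp
  have closok: "\<forall>x\<in>set (L @ [u]) - Z'. nbrs P x \<subseteq> set (L @ [u])"
  proof
    fix x assume x: "x \<in> set (L @ [u]) - Z'"
    then have xL: "x \<in> set L" unfolding Z'_def by auto
    show "nbrs P x \<subseteq> set (L @ [u])"
    proof (cases "x \<in> set L2")
      case True
      then have "\<not> ?Q x" using dec by blast
      then show ?thesis by auto
    next
      case False
      then have "x \<notin> Z" using x unfolding Z'_def by auto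
      then show ?thesis using clos xL by auto
    qed
  qed
  have "inv (L @ [u]) Z'"
    unfolding inv_def
    using Lne hdL dist uL Lc uc costok closok by (simp add: Z'_def)
  then have i1: "inv (dfs_step P L) Z'" using step_eq by simp
  have i2: "u \<in> comp P r - set L" using uc uL by blast
  show ?thesis using i1 i2 step_eq by blast
qed

lemma comp_fin: "finite (comp P r)"
  using compV finR finT by (meson finite_Un finite_subset)

lemma dfs_result:
  "set (dfshortcut P r) = comp P r \<and> dfshortcut P r \<noteq> [] \<and> hd (dfshortcut P r) = r \<and>
   distinct (dfshortcut P r) \<and> path_cost c (dfshortcut P r) \<le> 2 * Wt c P (comp P r)"
  unfolding dfshortcut_def
proof (rule while_rule[where P = "\<lambda>L. \<exists>Z. inv L Z" and r = "measure (\<lambda>L. card (comp P r - set L))"])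
  have "r \<in> comp P r" by (simp add: comp_nrel)
  then show "\<exists>Z. inv [r] Z" using Wt_nonneg unfolding inv_def by (intro exI[of _ "{r}"]) simp
next
  fix L assume "\<exists>Z. inv L Z" "\<not> comp P r \<subseteq> set L"
  then show "\<exists>Z. inv (dfs_step P L) Z" using inv_step by blast
next
  fix L assume "\<exists>Z. inv L Z" "\<not> \<not> comp P r \<subseteq> set L"
  then obtain Z where I: "inv L Z" and sub: "comp P r \<subseteq> set L" by blast
  have eq: "set L = comp P r" using I sub unfolding inv_def by blast
  have V: "set (filter (\<lambda>x. x \<in> Z) L) \<subseteq> R \<union> T" using eq compV by auto
  have "path_cost c (filter (\<lambda>x. x \<in> Z) L) \<ge> 0" using pc_nonneg[OF met V] .
  then show "set L = comp P r \<and> L \<noteq> [] \<and> hd L = r \<and> distinct L \<and> path_cost c L \<le> 2 * Wt c P (comp P r)"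
    using I eq unfolding inv_def by auto
next
  show "wf (measure (\<lambda>L. card (comp P r - set L)))" by simp
next
  fix L assume "\<exists>Z. inv L Z" "\<not> comp P r \<subseteq> set L"
  then obtain Z where I: "inv L Z" by blast
  obtain u where u: "u \<in> comp P r - set L" "dfs_step P L = L @ [u]"
    using inv_step[OF I \<open>\<not> comp P r \<subseteq> set L\<close>] by blast
  have "comp P r - set (L @ [u]) \<subset> comp P r - set L" using u by auto
  then have "card (comp P r - set (L @ [u])) < card (comp P r - set L)"
    using comp_fin by (meson finite_Diff psubset_card_mono)
  then show "(dfs_step P L, L) \<in> measure (\<lambda>L. card (comp P r - set L))" using u by simp
qed

end

lemma sum_UN_le:
  fixes f :: "'a \<Rightarrow> real"
  assumes "finite I" "\<forall>i\<in>I. finite (A i)" "\<forall>i\<in>I. \<forall>x\<in>A i. f x \<ge> 0"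
  shows "sum f (\<Union>i\<in>I. A i) \<le> (\<Sum>i\<in>I. sum f (A i))"
  using assms(1,2,3)
proof (induction rule: finite_induct)
  case empty then show ?case by simp
next
  case (insert i I)
  have fA: "finite (A i)" and fU: "finite (\<Union>j\<in>I. A j)" using insert by auto
  have "sum f (\<Union>j\<in>insert i I. A j) = sum f (A i \<union> (\<Union>j\<in>I. A j))" by simp
  also have "\<dots> = sum f (A i) + sum f (\<Union>j\<in>I. A j) - sum f (A i \<inter> (\<Union>j\<in>I. A j))"
    using sum_Un[OF fA fU, of f] by simp
  also have "\<dots> \<le> sum f (A i) + sum f (\<Union>j\<in>I. A j)"
  proof -
    have "sum f (A i \<inter> (\<Union>j\<in>I. A j)) \<ge> 0" using insert.prems by (intro sum_nonneg) blast
    then show ?thesis by simp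
  qed
  also have "\<dots> \<le> sum f (A i) + (\<Sum>j\<in>I. sum f (A j))" using insert by simp
  also have "\<dots> = (\<Sum>j\<in>insert i I. sum f (A j))" using insert by simp
  finally show ?case .
qed

definition edgs :: "'v list \<Rightarrow> 'v set list" where
  "edgs X = map (\<lambda>(x, y). {x, y}) (zip X (tl X))"

lemma edgs_simps[simp]: "edgs [] = []" "edgs [x] = []" "edgs (x # y # zs) = {x, y} # edgs (y # zs)"
  by (simp_all add: edgs_def)

lemma edgs_mem: "e \<in> set (edgs X) \<Longrightarrow> \<exists>x y. x \<in> set X \<and> y \<in> set X \<and> e = {x, y}"
  by (induction X rule: induct_list012) auto

lemma pc_edgs: "metric_cost V c \<Longrightarrow> set X \<subseteq> V \<Longrightarrow> sum_list (map (ecost c) (edgs X)) = path_cost c X"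
proof (induction X rule: induct_list012)
  case (3 x y zs)
  then show ?case using ecost_eq[OF 3(3), of x y] by simp
qed auto

lemma edgs_nth: "Suc i < length X \<Longrightarrow> edgs X ! i = {X ! i, X ! Suc i}"
  by (simp add: edgs_def nth_tl)

lemma edgs_len: "length (edgs X) = length X - 1"
  by (simp add: edgs_def)

lemma edgs_reach: "i < length X \<Longrightarrow> (X ! i, X ! 0) \<in> (relF (set (edgs X)))\<^sup>*"
proof (induction i)
  case 0 then show ?case by simp
next
  case (Suc i)
  have "edgs X ! i \<in> set (edgs X)" using Suc.prems edgs_len[of X] by (intro nth_mem) simp
  then have "{X ! i, X ! Suc i} \<in> set (edgs X)" using edgs_nth[OF Suc.prems] by simp
  then have "(X ! Suc i, X ! i) \<in> relF (set (edgs X))" by (simp add: relF_def insert_commute)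
  then show ?case using Suc by (meson Suc_lessD converse_rtrancl_into_rtrancl)
qed

lemma ereal_aux: "(S :: ereal) \<le> ereal a - (ereal a - S)"
  by (cases S) auto

context
  fixes R T :: "'v set" and c :: "'v \<Rightarrow> 'v \<Rightarrow> real"
  assumes inst: "mrta_instance R T"
    and met: "metric_cost (R \<union> T) c"
    and inj: "inj_on (ecost c) (edges R T)"
begin

lemma finR: "finite R" and finT: "finite T" and disj: "R \<inter> T = {}" and Rne: "R \<noteq> {}"
  using inst by (auto simp: mrta_instance_def)

lemma edges_eq: "edges R T = {e. e \<subseteq> R \<union> T \<and> card e = 2}"
  by (simp add: edges_def)

lemma auction_run_ok: "auction_run R T (ecost c) (auction R T c)"
proof -
  have ex: "\<exists>P. auction_run R T (ecost c) P" using run_exists[OF finT Rne finR] .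
  have "\<exists>!P. auction_run R T (ecost c) P"
  proof (rule ex_ex1I[OF ex])
    fix P1 P2 assume "auction_run R T (ecost c) P1" "auction_run R T (ecost c) P2"
    then show "P1 = P2" using run_unique[OF _ _ finT disj] inj edges_eq by metis
  qed
  then show ?thesis unfolding auction_def by (rule theI')
qed

abbreviation "PP \<equiv> auction R T c"

lemma plan_ok: "is_plan R T (assign R T c)"
proof -
  have res: "\<And>r. r \<in> R \<Longrightarrow> set (dfshortcut PP r) = comp PP r \<and> dfshortcut PP r \<noteq> [] \<and> hd (dfshortcut PP r) = r \<and>
   distinct (dfshortcut PP r) \<and> path_cost c (dfshortcut PP r) \<le> 2 * Wt c PP (comp PP r)"
    using dfs_result[OF auction_run_ok finT disj finR met] by blast
  have A: "\<forall>r\<in>R. assign R T c r \<noteq> [] \<and> hd (assign R T c r) = r \<and> set (tl (assign R T c r)) \<subseteq> T"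
  proof
    fix r assume r: "r \<in> R"
    let ?L = "dfshortcut PP r"
    have L: "set ?L = comp PP r" "?L \<noteq> []" "hd ?L = r" "distinct ?L" using res[OF r] by blast+
    have "set (tl ?L) \<subseteq> T"
    proof
      fix x assume x: "x \<in> set (tl ?L)"
      have "?L = hd ?L # tl ?L" using L(2) by simp
      then have "x \<noteq> r" using L(3,4) x by (metis distinct.simps(2))
      moreover have "x \<in> comp PP r" using list.set_sel(2)[OF L(2) x] L(1) by simp
      ultimately show "x \<in> T"
        using comp_R[OF auction_run_ok finT disj r] comp_V[OF auction_run_ok finT disj r] by blast
    qed
    then show "assign R T c r \<noteq> [] \<and> hd (assign R T c r) = r \<and> set (tl (assign R T c r)) \<subseteq> T"
      using L by (simp add: assign_def)
  qed
  have B: "\<forall>r\<in>R. \<forall>r'\<in>R. r \<noteq> r' \<longrightarrow> set (assign R T c r) \<inter> set (assign R T c r') = {}"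
    using res comp_disj[OF auction_run_ok finT disj] by (simp add: assign_def)
  have C: "(\<Union>r\<in>R. set (assign R T c r)) = R \<union> T"
  proof -
    have "(\<Union>r\<in>R. set (assign R T c r)) = (\<Union>r\<in>R. comp PP r)"
      using res by (simp add: assign_def)
    then show ?thesis using comp_union[OF auction_run_ok finT disj] by simp
  qed
  show ?thesis unfolding is_plan_def using A B C by blast
qed

lemma ecost_nonneg_V: "x \<in> R \<union> T \<Longrightarrow> y \<in> R \<union> T \<Longrightarrow> ecost c {x, y} \<ge> 0"
  using ecost_eq[OF met] metric_nonneg[OF met] by simp

lemma W_nonneg: "e \<in> set (wedges PP) \<Longrightarrow> ecost c e \<ge> 0"
  using in_wedges[OF auction_run_ok finT disj] src_V[OF auction_run_ok finT disj]
    tgt_T[OF auction_run_ok finT disj] ecost_nonneg_V by blast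

lemma comps_sum: "(\<Sum>r\<in>R. Wt c PP (comp PP r)) \<le> sum (ecost c) (set (wedges PP))"
proof -
  let ?A = "\<lambda>r. {e \<in> set (wedges PP). e \<subseteq> comp PP r}"
  have disjA: "\<forall>i\<in>R. \<forall>j\<in>R. i \<noteq> j \<longrightarrow> ?A i \<inter> ?A j = {}"
  proof (intro ballI impI)
    fix i j assume ij: "i \<in> R" "j \<in> R" "i \<noteq> j"
    show "?A i \<inter> ?A j = {}"
    proof (rule ccontr)
      assume "?A i \<inter> ?A j \<noteq> {}"
      then obtain e where e: "e \<in> set (wedges PP)" "e \<subseteq> comp PP i" "e \<subseteq> comp PP j" by blast
      obtain k where "e = {fst (PP ! k), snd (PP ! k)}" using in_wedges[OF auction_run_ok finT disj e(1)] by blast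
      then have "fst (PP ! k) \<in> comp PP i \<inter> comp PP j" using e by blast
      then show False using comp_disj[OF auction_run_ok finT disj ij] by blast
    qed
  qed
  have "(\<Sum>r\<in>R. Wt c PP (comp PP r)) = sum (ecost c) (\<Union>(?A ` R))"
    unfolding Wt_def by (rule sum.UNION_disjoint[symmetric]) (use finR disjA in auto)
  also have "\<dots> \<le> sum (ecost c) (set (wedges PP))"
    by (rule sum_mono2) (use W_nonneg in auto)
  finally show ?thesis .
qed

lemma cost_ok:
  assumes Pl: "is_plan R T Pl"
  shows "plan_cost c R (assign R T c) \<le> 2 * plan_cost c R Pl"
proof -
  have res: "\<And>r. r \<in> R \<Longrightarrow> path_cost c (dfshortcut PP r) \<le> 2 * Wt c PP (comp PP r)"
    using dfs_result[OF auction_run_ok finT disj finR met] by blast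
  have "plan_cost c R (assign R T c) \<le> (\<Sum>r\<in>R. 2 * Wt c PP (comp PP r))"
    unfolding plan_cost_def assign_def by (rule sum_mono) (use res in blast)
  also have "\<dots> = 2 * (\<Sum>r\<in>R. Wt c PP (comp PP r))" by (simp add: sum_distrib_left)
  also have "\<dots> \<le> 2 * sum (ecost c) (set (wedges PP))" using comps_sum by simp
  also have "\<dots> \<le> 2 * sum_list (map (ecost c) (wedges PP))"
    using sum_set_le_sum_list[of "wedges PP" "ecost c"] W_nonneg by simp
  finally have step1: "plan_cost c R (assign R T c) \<le> 2 * sum_list (map (ecost c) (wedges PP))" .
  define F where "F = (\<Union>r\<in>R. set (edgs (Pl r)))"
  have PlV: "\<And>r. r \<in> R \<Longrightarrow> set (Pl r) \<subseteq> R \<union> T" using Pl unfolding is_plan_def by blast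
  have Fsub: "\<forall>e\<in>F. e \<subseteq> R \<union> T \<and> ecost c e \<ge> 0"
  proof
    fix e assume "e \<in> F"
    then obtain r where r: "r \<in> R" "e \<in> set (edgs (Pl r))" unfolding F_def by blast
    then obtain x y where "x \<in> set (Pl r)" "y \<in> set (Pl r)" "e = {x, y}" using edgs_mem by blast
    then show "e \<subseteq> R \<union> T \<and> ecost c e \<ge> 0" using PlV[OF r(1)] ecost_nonneg_V by blast
  qed
  have finF: "finite F" unfolding F_def using finR by simp
  have reach: "\<forall>t\<in>T. \<exists>r\<in>R. (t, r) \<in> (relF F)\<^sup>*"
  proof
    fix t assume t: "t \<in> T"
    then have "t \<in> (\<Union>r\<in>R. set (Pl r))" using Pl unfolding is_plan_def by blast
    then obtain r where r: "r \<in> R" "t \<in> set (Pl r)" by blast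
    then obtain i where i: "i < length (Pl r)" "Pl r ! i = t" by (meson in_set_conv_nth)
    have ne: "Pl r \<noteq> []" and hd: "hd (Pl r) = r" using Pl r(1) unfolding is_plan_def by blast+
    have "(t, r) \<in> (relF (set (edgs (Pl r))))\<^sup>*" using edgs_reach[OF i(1)] i(2) hd ne by (simp add: hd_conv_nth)
    moreover have "relF (set (edgs (Pl r))) \<subseteq> relF F" using r(1) unfolding F_def relF_def by blast
    ultimately show "\<exists>r\<in>R. (t, r) \<in> (relF F)\<^sup>*" using r(1) rtrancl_mono by blast
  qed
  have "sum_list (map (ecost c) (wedges PP)) \<le> sum (ecost c) F"
    by (rule mst[OF auction_run_ok finT finF disj Fsub reach])
  also have "\<dots> \<le> (\<Sum>r\<in>R. sum (ecost c) (set (edgs (Pl r))))"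
    unfolding F_def by (rule sum_UN_le) (use finR Fsub F_def in auto)
  also have "\<dots> \<le> (\<Sum>r\<in>R. path_cost c (Pl r))"
  proof (rule sum_mono)
    fix r assume r: "r \<in> R"
    have "sum (ecost c) (set (edgs (Pl r))) \<le> sum_list (map (ecost c) (edgs (Pl r)))"
      by (rule sum_set_le_sum_list) (use Fsub r F_def in blast)
    also have "\<dots> = path_cost c (Pl r)" using pc_edgs[OF met PlV[OF r]] .
    finally show "sum (ecost c) (set (edgs (Pl r))) \<le> path_cost c (Pl r)" .
  qed
  finally show ?thesis using step1 unfolding plan_cost_def by simp
qed

end

context
  fixes R T :: "'v set" and c :: "'v \<Rightarrow> 'v \<Rightarrow> real" and c' :: "'v set \<Rightarrow> real"
  assumes inst: "mrta_instance R T"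
    and met: "metric_cost (R \<union> T) c"
    and inj: "inj_on (ecost c) (edges R T)"
    and H: "\<forall>e\<in>edges R T.
              ereal (ecost c e) - delta_low (ecost c) (edges R T) (auction R T c) e < ereal (c' e) \<and>
              ereal (c' e) \<le> ereal (ecost c e) + delta_up (ecost c) (edges R T) (auction R T c) e"
begin

abbreviation "QQ \<equiv> auction R T c"

lemma run0: "auction_run R T (ecost c) QQ" using auction_run_ok[OF inst met inj] .
lemma finT': "finite T" using finT[OF inst met inj] .
lemma disj': "R \<inter> T = {}" using disj[OF inst met inj] .

lemma pair_edge: "X \<subseteq> T \<Longrightarrow> a \<in> R \<union> X \<Longrightarrow> b \<in> T - X \<Longrightarrow> {a, b} \<in> edges R T"
proof -
  assume X: "X \<subseteq> T" and a: "a \<in> R \<union> X" and b: "b \<in> T - X"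
  have "a \<noteq> b" using a b disj' by blast
  moreover have "{a, b} \<subseteq> R \<union> T" using a b X by blast
  ultimately show ?thesis by (simp add: edges_def)
qed

lemma strict:
  assumes k: "k < length QQ" and s': "s' \<in> R \<union> set (map snd (take k QQ))"
    and t': "t' \<in> T - set (map snd (take k QQ))" and ne: "{s', t'} \<noteq> wedges QQ ! k"
  shows "c' (wedges QQ ! k) < c' {s', t'}"
proof -
  let ?A = "set (map snd (take k QQ))"
  let ?E = "edges R T"
  let ?w = "wedges QQ ! k"
  let ?e = "{s', t'}"
  let ?G = "\<lambda>j. ereal (ecost c (wk QQ j)) + delta_up (ecost c) ?E QQ (wk QQ j)"
  have AT: "?A \<subseteq> T" using A_sub[OF run0 finT' disj'] .
  have ee: "?e \<in> ?E" using pair_edge[OF AT s' t'] .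
  have wdef: "?w = {fst (QQ ! k), snd (QQ ! k)}" using wedges_nth[OF run0 finT' disj' k] .
  have we: "?w \<in> ?E" unfolding wdef
    using pair_edge[OF AT run_k(1)[OF run0 finT' disj' k] run_k(2)[OF run0 finT' disj' k]] .
  have wk: "wk QQ (Suc k) = ?w" by (simp add: wk_def)
  have as: "anum QQ s' \<le> k"
  proof (cases "s' \<in> R")
    case True
    then have "s' \<notin> T" using disj' by blast
    then show ?thesis using anum_notT[OF run0 finT' disj'] by simp
  next
    case False
    then show ?thesis using s' anum_A[OF run0 finT' disj'] by blast
  qed
  have at: "Suc k \<le> anum QQ t'" using anum_notA[OF run0 finT' disj' t'] .
  have B: "Suc k \<in> Bset QQ ?e"
    using as at by (simp add: Bset_def)
  have key: "?G (Suc k) \<le> ereal (ecost c ?e) - delta_low (ecost c) ?E QQ ?e"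
  proof (cases "?e \<in> set (wedges QQ)")
    case True
    have nr: "Suc k \<noteq> wround QQ ?e"
    proof
      assume eq: "Suc k = wround QQ ?e"
      then have L: "(LEAST j. wedges QQ ! j = ?e) = k" by (simp add: wround_def)
      obtain j where "wedges QQ ! j = ?e" using True by (metis in_set_conv_nth)
      then have "wedges QQ ! (LEAST j. wedges QQ ! j = ?e) = ?e" by (rule LeastI)
      then show False using L ne by simp
    qed
    let ?S = "Bset QQ ?e - {wround QQ ?e}"
    have inS: "Suc k \<in> ?S" using B nr by blast
    then have Sne: "?S \<noteq> {}" by blast
    have dl: "delta_low (ecost c) ?E QQ ?e = ereal (ecost c ?e) - (SUP j\<in>?S. ?G j)"
      using True Sne by (simp add: delta_low_def Let_def)
    have "?G (Suc k) \<le> (SUP j\<in>?S. ?G j)" using inS by (rule SUP_upper)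
    also have "\<dots> \<le> ereal (ecost c ?e) - delta_low (ecost c) ?E QQ ?e"
      unfolding dl by (rule ereal_aux)
    finally show ?thesis .
  next
    case False
    have dl: "delta_low (ecost c) ?E QQ ?e = ereal (ecost c ?e) - (SUP j\<in>Bset QQ ?e. ?G j)"
      using False by (simp add: delta_low_def)
    have "?G (Suc k) \<le> (SUP j\<in>Bset QQ ?e. ?G j)" using B by (rule SUP_upper)
    also have "\<dots> \<le> ereal (ecost c ?e) - delta_low (ecost c) ?E QQ ?e"
      unfolding dl by (rule ereal_aux)
    finally show ?thesis .
  qed
  have 1: "ereal (c' ?w) \<le> ?G (Suc k)" using H we unfolding wk by blast
  have 2: "ereal (ecost c ?e) - delta_low (ecost c) ?E QQ ?e < ereal (c' ?e)" using H ee by blast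
  have "ereal (c' ?w) < ereal (c' ?e)" using 1 key 2 by (meson order_le_less_trans order_trans)
  then show ?thesis by simp
qed

lemma robust_eq:
  assumes P': "auction_run R T c' P'"
  shows "P' = QQ"
proof -
  have lenP: "length QQ = card T" using len[OF run0 finT' disj'] .
  have lenP': "length P' = card T" using len[OF P' finT' disj'] .
  have "k \<le> length QQ \<Longrightarrow> take k P' = take k QQ" for k
  proof (induction k)
    case 0 then show ?case by simp
  next
    case (Suc k)
    then have k: "k < length QQ" and k': "k < length P'" using lenP lenP' by auto
    have tk: "take k P' = take k QQ" using Suc by simp
    let ?A = "set (map snd (take k QQ))"
    obtain s t where st: "QQ ! k = (s, t)" by force
    obtain s2 t2 where st2: "P' ! k = (s2, t2)" by force
    have s: "s \<in> R \<union> ?A" and t: "t \<in> T - ?A"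
      using run_k(1,2)[OF run0 finT' disj' k] st by auto
    have s2: "s2 \<in> R \<union> ?A" and t2: "t2 \<in> T - ?A"
      using run_k(1,2)[OF P' finT' disj' k'] st2 tk by auto
    have min: "c' {s2, t2} \<le> c' {s, t}"
      using run_k(3)[OF P' finT' disj' k'] st2 tk s t by auto
    have "{s2, t2} = {s, t}"
    proof (rule ccontr)
      assume "{s2, t2} \<noteq> {s, t}"
      then have "{s2, t2} \<noteq> wedges QQ ! k" using wedges_nth[OF run0 finT' disj' k] st by simp
      then have "c' (wedges QQ ! k) < c' {s2, t2}" using strict[OF k s2 t2] by blast
      then show False using min wedges_nth[OF run0 finT' disj' k] st by simp
    qed
    moreover have "s2 \<noteq> t" "t2 \<noteq> s" using s t s2 t2 disj' by blast+
    ultimately have "s2 = s" "t2 = t" by (auto simp: doubleton_eq_iff)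
    then have "P' ! k = QQ ! k" using st st2 by simp
    then show ?case using tk k k' by (simp add: take_Suc_conv_app_nth)
  qed
  then have "take (length QQ) P' = take (length QQ) QQ" by simp
  then show ?thesis using lenP lenP' by simp
qed

end

theorem corollary13:
  fixes R T :: "'v set" and c :: "'v \<Rightarrow> 'v \<Rightarrow> real"
  assumes "mrta_instance R T"
    and "metric_cost (R \<union> T) c"
    and "inj_on (ecost c) (edges R T)"
  shows "(is_plan R T (assign R T c) \<and>
         (\<forall>Pl. is_plan R T Pl \<longrightarrow> plan_cost c R (assign R T c) \<le> 2 * plan_cost c R Pl)) \<and>
         (\<forall>c' :: 'v set \<Rightarrow> real.
           (\<forall>e\<in>edges R T.
              ereal (ecost c e) - delta_low (ecost c) (edges R T) (auction R T c) e < ereal (c' e) \<and>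
              ereal (c' e) \<le> ereal (ecost c e) + delta_up (ecost c) (edges R T) (auction R T c) e)
           \<longrightarrow> (\<forall>P'. auction_run R T c' P' \<longrightarrow>
                  wedges P' = wedges (auction R T c) \<and>
                  (\<forall>r\<in>R. dfshortcut P' r = assign R T c r)))"
proof -
  have P1: "is_plan R T (assign R T c)" using plan_ok[OF assms] .
  have P2: "\<forall>Pl. is_plan R T Pl \<longrightarrow> plan_cost c R (assign R T c) \<le> 2 * plan_cost c R Pl"
    using cost_ok[OF assms] by blast
  have P3: "\<forall>c' :: 'v set \<Rightarrow> real.
           (\<forall>e\<in>edges R T.
              ereal (ecost c e) - delta_low (ecost c) (edges R T) (auction R T c) e < ereal (c' e) \<and>
              ereal (c' e) \<le> ereal (ecost c e) + delta_up (ecost c) (edges R T) (auction R T c) e)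
           \<longrightarrow> (\<forall>P'. auction_run R T c' P' \<longrightarrow>
                  wedges P' = wedges (auction R T c) \<and>
                  (\<forall>r\<in>R. dfshortcut P' r = assign R T c r))"
  proof (intro allI impI)
    fix c' :: "'v set \<Rightarrow> real" and P'
    assume H: "\<forall>e\<in>edges R T.
              ereal (ecost c e) - delta_low (ecost c) (edges R T) (auction R T c) e < ereal (c' e) \<and>
              ereal (c' e) \<le> ereal (ecost c e) + delta_up (ecost c) (edges R T) (auction R T c) e"
      and run': "auction_run R T c' P'"
    have "P' = auction R T c" using robust_eq[OF assms H run'] .
    then show "wedges P' = wedges (auction R T c) \<and> (\<forall>r\<in>R. dfshortcut P' r = assign R T c r)"
      by (simp add: assign_def)
  qed
  show ?thesis using P1 P2 P3 by blast
qed

end
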